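(* Let $X$ be a non-empty finite set and $\mathcal{P}=\{P_1,\ldots,P_n\}$ a partition of $X$ indexed so that $|P_i|\le|P_{i+1}|$, with distinct block sizes $l_1<\cdots<l_r$. If $f\in\Sigma(X,\mathcal{P})$ and there is a companion of $\overline{f}$ in the subsemigroup generated by $S(X,\mathcal{P})\cup\mathcal{B}$, then $f$ lies in the subsemigroup generated by $S(X,\mathcal{P})\cup\mathcal{B}\cup\mathcal{C}$.
   Context: Maps are written on the right and composed left to right. $T(X,\mathcal{P})$ is the semigroup of maps $f:X\to X$ mapping each block of $\mathcal{P}$ into some block; $S(X,\mathcal{P})$ is its group of units; $\Sigma(X,\mathcal{P})$ is the set of $f\in T(X,\mathcal{P})$ whose image intersects every block. For $f\in T(X,\mathcal{P})$, $\overline{f}$ is the map on $\{1,\ldots,n\}$ with $(i)\overline{f}=j$ whenever $P_if\subseteq P_j$ (for $f\in\Sigma(X,\mathcal{P})$ this is a permutation). For $i\le r-1$, $\mathcal{B}_i$ is the set of $f\in\Sigma(X,\mathcal{P})$ for which there are blocks $P_j,P_{j'},P_k,P_{k'}$ (possibly $j=j'$ or $k=k'$) with $|P_j|=|P_{j'}|=l_i$, $|P_k|=|P_{k'}|=l_{i+1}$, such that $f$ maps $P_j$ injectively into $P_k$, maps $P_{k'}$ onto $P_{j'}$, and maps every other block bijectively onto a block of the same size; $\mathcal{B}=\bigcup_{i=1}^{r-1}\mathcal{B}_i$. For $i\le r$, $\mathcal{C}_i$ is the set of $f\in\Sigma(X,\mathcal{P})$ mapping each block into a block of the same size, such that one block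 of size $l_i$ has image of size $l_i-1$ and all other blocks are mapped injectively; $\mathcal{C}=\bigcup_{i=1}^r\mathcal{C}_i$. For a permutation $\pi$ of $\{1,\ldots,n\}$, a companion of $\pi$ is a $g\in\Sigma(X,\mathcal{P})$ with $\overline{g}=\pi$ such that $g|_{P_i}:P_i\to P_{(i)\pi}$ is injective whenever $|P_i|\le|P_{(i)\pi}|$ and surjective whenever $|P_i|\ge|P_{(i)\pi}|$. *)

theory Defs
  imports "HOL-Library.FuncSet"
begin

text \<open>Maps on X are extensional functions in the FuncSet X to X. Blocks are indexed 0..n-1.
  Composition left to right: f then g is compose X g f.\<close>

definition is_sorted_partition :: "'a set \<Rightarrow> (nat \<Rightarrow> 'a set) \<Rightarrow> nat \<Rightarrow> bool" where
  "is_sorted_partition X P n \<longleftrightarrow>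
     (\<forall>i<n. P i \<noteq> {}) \<and>
     (\<forall>i<n. \<forall>j<n. i \<noteq> j \<longrightarrow> P i \<inter> P j = {}) \<and>
     (\<Union>i<n. P i) = X \<and>
     (\<forall>i. Suc i < n \<longrightarrow> card (P i) \<le> card (P (Suc i)))"

definition distinct_sizes :: "(nat \<Rightarrow> 'a set) \<Rightarrow> nat \<Rightarrow> (nat \<Rightarrow> nat) \<Rightarrow> nat \<Rightarrow> bool" where
  "distinct_sizes P n l r \<longleftrightarrow>
     (\<forall>i. Suc i < r \<longrightarrow> l i < l (Suc i)) \<and>
     l ` {..<r} = (\<lambda>i. card (P i)) ` {..<n}"

definition T_sg :: "'a set \<Rightarrow> (nat \<Rightarrow> 'a set) \<Rightarrow> nat \<Rightarrow> ('a \<Rightarrow> 'a) set" where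
  "T_sg X P n = {f \<in> X \<rightarrow>\<^sub>E X. \<forall>i<n. \<exists>j<n. f ` P i \<subseteq> P j}"

definition S_grp :: "'a set \<Rightarrow> (nat \<Rightarrow> 'a set) \<Rightarrow> nat \<Rightarrow> ('a \<Rightarrow> 'a) set" where
  "S_grp X P n = {f \<in> T_sg X P n. \<exists>g \<in> T_sg X P n.
       compose X g f = restrict id X \<and> compose X f g = restrict id X}"

definition Sigma_sg :: "'a set \<Rightarrow> (nat \<Rightarrow> 'a set) \<Rightarrow> nat \<Rightarrow> ('a \<Rightarrow> 'a) set" where
  "Sigma_sg X P n = {f \<in> T_sg X P n. \<forall>i<n. f ` X \<inter> P i \<noteq> {}}"

definition fbar :: "(nat \<Rightarrow> 'a set) \<Rightarrow> nat \<Rightarrow> ('a \<Rightarrow> 'a) \<Rightarrow> nat \<Rightarrow> nat" where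
  "fbar P n f i = (THE j. j < n \<and> f ` P i \<subseteq> P j)"

definition B_i :: "'a set \<Rightarrow> (nat \<Rightarrow> 'a set) \<Rightarrow> nat \<Rightarrow> (nat \<Rightarrow> nat) \<Rightarrow> nat \<Rightarrow> ('a \<Rightarrow> 'a) set" where
  "B_i X P n l i = {f \<in> Sigma_sg X P n. \<exists>j<n. \<exists>j'<n. \<exists>k<n. \<exists>k'<n.
      card (P j) = l i \<and> card (P j') = l i \<and>
      card (P k) = l (Suc i) \<and> card (P k') = l (Suc i) \<and>
      inj_on f (P j) \<and> f ` P j \<subseteq> P k \<and>
      f ` P k' = P j' \<and>
      (\<forall>m<n. m \<noteq> j \<and> m \<noteq> k' \<longrightarrow>
         (\<exists>m'<n. card (P m') = card (P m) \<and> bij_betw f (P m) (P m')))}"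

definition B_set :: "'a set \<Rightarrow> (nat \<Rightarrow> 'a set) \<Rightarrow> nat \<Rightarrow> (nat \<Rightarrow> nat) \<Rightarrow> nat \<Rightarrow> ('a \<Rightarrow> 'a) set" where
  "B_set X P n l r = (\<Union>i\<in>{i. Suc i < r}. B_i X P n l i)"

definition C_i :: "'a set \<Rightarrow> (nat \<Rightarrow> 'a set) \<Rightarrow> nat \<Rightarrow> (nat \<Rightarrow> nat) \<Rightarrow> nat \<Rightarrow> ('a \<Rightarrow> 'a) set" where
  "C_i X P n l i = {f \<in> Sigma_sg X P n.
      (\<forall>m<n. \<exists>m'<n. card (P m') = card (P m) \<and> f ` P m \<subseteq> P m') \<and>
      (\<exists>j<n. card (P j) = l i \<and> card (f ` P j) = l i - 1 \<and>
         (\<forall>m<n. m \<noteq> j \<longrightarrow> inj_on f (P m)))}"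

definition C_set :: "'a set \<Rightarrow> (nat \<Rightarrow> 'a set) \<Rightarrow> nat \<Rightarrow> (nat \<Rightarrow> nat) \<Rightarrow> nat \<Rightarrow> ('a \<Rightarrow> 'a) set" where
  "C_set X P n l r = (\<Union>i<r. C_i X P n l i)"

definition companion :: "'a set \<Rightarrow> (nat \<Rightarrow> 'a set) \<Rightarrow> nat \<Rightarrow> (nat \<Rightarrow> nat) \<Rightarrow> ('a \<Rightarrow> 'a) \<Rightarrow> bool" where
  "companion X P n \<pi> g \<longleftrightarrow> g \<in> Sigma_sg X P n \<and>
     (\<forall>i<n. fbar P n g i = \<pi> i) \<and>
     (\<forall>i<n. card (P i) \<le> card (P (\<pi> i)) \<longrightarrow> inj_on g (P i)) \<and>
     (\<forall>i<n. card (P i) \<ge> card (P (\<pi> i)) \<longrightarrow> g ` P i = P (\<pi> i))"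

inductive_set gen_sg :: "'a set \<Rightarrow> ('a \<Rightarrow> 'a) set \<Rightarrow> ('a \<Rightarrow> 'a) set" for X A where
  base: "a \<in> A \<Longrightarrow> a \<in> gen_sg X A"
| comp: "a \<in> gen_sg X A \<Longrightarrow> b \<in> gen_sg X A \<Longrightarrow> compose X b a \<in> gen_sg X A"

end

theory Submission
  imports Defs
begin

lemma gen_sg_mono1: assumes "A \<subseteq> B" "x \<in> gen_sg X A" shows "x \<in> gen_sg X B"
  using assms(2) by induction (use assms(1) in \<open>auto intro: gen_sg.intros\<close>)

lemma part_sub: "is_sorted_partition X P n \<Longrightarrow> i < n \<Longrightarrow> P i \<subseteq> X"
  unfolding is_sorted_partition_def by blast

lemma part_cover: "is_sorted_partition X P n \<Longrightarrow> x \<in> X \<Longrightarrow> \<exists>i<n. x \<in> P i"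
  unfolding is_sorted_partition_def by blast

lemma part_uniq: "is_sorted_partition X P n \<Longrightarrow> i < n \<Longrightarrow> j < n \<Longrightarrow> x \<in> P i \<Longrightarrow> x \<in> P j \<Longrightarrow> i = j"
  unfolding is_sorted_partition_def by blast

lemma part_ne: "is_sorted_partition X P n \<Longrightarrow> i < n \<Longrightarrow> P i \<noteq> {}"
  unfolding is_sorted_partition_def by blast

lemma fbar_spec:
  assumes "is_sorted_partition X P n" "f \<in> T_sg X P n" "i < n"
  shows "fbar P n f i < n \<and> f ` P i \<subseteq> P (fbar P n f i)"
proof -
  obtain j where j: "j < n" "f ` P i \<subseteq> P j" using assms unfolding T_sg_def by blast
  have uniq: "\<And>j'. j' < n \<and> f ` P i \<subseteq> P j' \<Longrightarrow> j' = j"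
  proof -
    fix j' assume a: "j' < n \<and> f ` P i \<subseteq> P j'"
    obtain x where x: "x \<in> P i" using part_ne[OF assms(1,3)] by blast
    have "f x \<in> P j'" "f x \<in> P j" using x a j by blast+
    then show "j' = j" using a j(1) part_uniq[OF assms(1), of j' j "f x"] by blast
  qed
  have "fbar P n f i = j" unfolding fbar_def
    by (rule the_equality) (use j uniq in blast)+
  then show ?thesis using j by simp
qed

lemma block_pres_gen:
  assumes fin: "finite X" and part: "is_sorted_partition X P n"
    and ds: "distinct_sizes P n l r"
  shows "\<And>h. card X - card (h ` X) = d \<Longrightarrow> h \<in> X \<rightarrow>\<^sub>E X \<Longrightarrow> (\<forall>i<n. h ` P i \<subseteq> P i)
     \<Longrightarrow> h \<in> gen_sg X (S_grp X P n \<union> C_set X P n l r)"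
proof (induction d rule: less_induct)
  case (less d h)
  have hX: "h ` X \<subseteq> X" using less.prems(2) by auto
  have hT: "h \<in> T_sg X P n" unfolding T_sg_def using less.prems(2,3) by blast
  show ?case
  proof (cases "card (h ` X) = card X")
    case True
    have inj: "inj_on h X" using True fin by (simp add: eq_card_imp_inj_on)
    have surj: "h ` X = X" using True fin hX by (simp add: card_subset_eq)
    define g where "g = restrict (inv_into X h) X"
    have blk: "\<And>x i. i < n \<Longrightarrow> x \<in> X \<Longrightarrow> h x \<in> P i \<Longrightarrow> x \<in> P i"
    proof -
      fix x i assume a: "i < n" "x \<in> X" "h x \<in> P i"
      obtain j where j: "j < n" "x \<in> P j" using part_cover[OF part a(2)] by blast
      then have "h x \<in> P j" using less.prems(3) by blast
      then show "x \<in> P i" using part_uniq[OF part a(1) j(1) a(3)] j by simp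
    qed
    have gT: "g \<in> T_sg X P n"
      unfolding T_sg_def
    proof (intro CollectI conjI allI impI)
      show "g \<in> X \<rightarrow>\<^sub>E X" unfolding g_def using surj by (auto intro: inv_into_into)
      fix i assume i: "i < n"
      have "g ` P i \<subseteq> P i"
      proof
        fix y assume "y \<in> g ` P i"
        then obtain z where z: "z \<in> P i" "y = g z" by blast
        have zX: "z \<in> X" using z part_sub[OF part i] by blast
        have "y = inv_into X h z" using z zX g_def by simp
        moreover have "inv_into X h z \<in> X" using zX surj by (metis inv_into_into)
        moreover have "h (inv_into X h z) = z" using zX surj by (metis f_inv_into_f)
        ultimately show "y \<in> P i" using blk i z by metis
      qed
      then show "\<exists>j<n. g ` P i \<subseteq> P j" using i by blast
    qed
    have "compose X g h = restrict id X"
      unfolding compose_def g_def using inj hX by (intro restrict_ext) (auto simp: image_subset_iff)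
    moreover have "compose X h g = restrict id X"
      unfolding compose_def g_def using surj by (intro restrict_ext) (auto simp: f_inv_into_f inv_into_into)
    ultimately have "h \<in> S_grp X P n" unfolding S_grp_def using hT gT by blast
    then show ?thesis by (auto intro: gen_sg.base)
  next
    case False
    have "card (h ` X) \<le> card X" using fin by (simp add: card_image_le)
    then have lt: "card (h ` X) < card X" using False by simp
    then have "\<not> inj_on h X" using card_image by fastforce
    then obtain a b where ab: "a \<in> X" "b \<in> X" "a \<noteq> b" "h a = h b"
      unfolding inj_on_def by blast
    obtain i where i: "i < n" "b \<in> P i" using part_cover[OF part ab(2)] by blast
    obtain i' where i': "i' < n" "a \<in> P i'" using part_cover[OF part ab(1)] by blast
    have "h a \<in> P i'" "h b \<in> P i" using i i' less.prems(3) by blast+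
    then have "i' = i" using part_uniq[OF part i'(1) i(1)] ab(4) by simp
    then have ai: "a \<in> P i" using i' by simp
    have finPi: "finite (P i)" using fin part_sub[OF part i(1)] finite_subset by blast
    have "\<not> inj_on h (P i)" using ai i ab unfolding inj_on_def by blast
    then have "card (h ` P i) \<noteq> card (P i)" using finPi eq_card_imp_inj_on by blast
    then have "h ` P i \<noteq> P i" by auto
    then obtain y where y: "y \<in> P i" "y \<notin> h ` P i" using less.prems(3) i by blast
    have yX: "y \<in> X" using y part_sub[OF part i(1)] by blast
    have ynot: "y \<notin> h ` X"
    proof
      assume "y \<in> h ` X"
      then obtain x where x: "x \<in> X" "y = h x" by blast
      obtain k where k: "k < n" "x \<in> P k" using part_cover[OF part x(1)] by blast
      then have "h x \<in> P k" using less.prems(3) by blast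
      then have "k = i" using part_uniq[OF part k(1) i(1)] x y by simp
      then show False using x k y by blast
    qed
    define h2 where "h2 = h(b := y)"
    define c where "c = (\<lambda>x. if x \<in> X then (if x = b then a else x) else undefined)"
    have h2X: "h2 ` X = insert y (h ` X)"
    proof -
      have "h ` X = insert (h b) (h ` (X - {b}))" using ab(2) by (metis image_insert insert_Diff)
      moreover have "h b \<in> h ` (X - {b})" using ab by (metis DiffI image_eqI singletonD)
      ultimately have "h ` X = h ` (X - {b})" by (simp add: insert_absorb)
      moreover have "h2 ` X = insert y (h ` (X - {b}))" unfolding h2_def using ab(2) by auto
      ultimately show ?thesis by simp
    qed
    have "card (h2 ` X) = Suc (card (h ` X))"
      using h2X ynot fin by simp
    then have dlt: "card X - card (h2 ` X) < d" using less.prems(1) lt by simp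
    have h2E: "h2 \<in> X \<rightarrow>\<^sub>E X" unfolding h2_def using less.prems(2) yX ab(2) by auto
    have h2P: "\<forall>k<n. h2 ` P k \<subseteq> P k"
    proof (intro allI impI)
      fix k assume k: "k < n"
      show "h2 ` P k \<subseteq> P k"
      proof
        fix z assume "z \<in> h2 ` P k"
        then obtain x where x: "x \<in> P k" "z = h2 x" by blast
        show "z \<in> P k"
        proof (cases "x = b")
          case True
          then have "k = i" using part_uniq[OF part k i(1)] x i by simp
          then show ?thesis using x True y h2_def by simp
        next
          case False
          then show ?thesis using x less.prems(3) k h2_def by auto
        qed
      qed
    qed
    have IH: "h2 \<in> gen_sg X (S_grp X P n \<union> C_set X P n l r)"
      using less.IH[OF dlt refl h2E h2P] .
    have cP: "\<And>k x. k < n \<Longrightarrow> x \<in> P k \<Longrightarrow> c x \<in> P k"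
    proof -
      fix k x assume k: "k < n" "x \<in> P k"
      have xX: "x \<in> X" using k part_sub[OF part k(1)] by blast
      show "c x \<in> P k"
      proof (cases "x = b")
        case True
        then have "k = i" using part_uniq[OF part k(1) i(1)] k i by simp
        then show ?thesis using True ai xX c_def by simp
      next
        case False then show ?thesis using xX k c_def by simp
      qed
    qed
    have cE: "c \<in> X \<rightarrow>\<^sub>E X" unfolding c_def using ab by auto
    have cPs: "\<forall>k<n. c ` P k \<subseteq> P k" using cP by blast
    have cT: "c \<in> T_sg X P n" unfolding T_sg_def using cE cPs by blast
    have cS: "c \<in> Sigma_sg X P n" unfolding Sigma_sg_def
    proof (intro CollectI conjI allI impI cT)
      fix k assume k: "k < n"
      obtain x where x: "x \<in> P k" using part_ne[OF part k] by blast
      have "x \<in> X" using x part_sub[OF part k] by blast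
      then show "c ` X \<inter> P k \<noteq> {}" using cP[OF k x] by blast
    qed
    obtain idx where idx: "idx < r" "l idx = card (P i)"
      using ds i(1) unfolding distinct_sizes_def by (metis imageE imageI lessThan_iff)
    have cPi: "c ` P i = P i - {b}"
    proof
      show "c ` P i \<subseteq> P i - {b}" using cP[OF i(1)] ab ai part_sub[OF part i(1)] c_def by auto
      show "P i - {b} \<subseteq> c ` P i"
      proof
        fix z assume z: "z \<in> P i - {b}"
        then have "c z = z" using part_sub[OF part i(1)] c_def by auto
        then show "z \<in> c ` P i" using z by (metis DiffD1 imageI)
      qed
    qed
    have "card (c ` P i) = l idx - 1" using cPi idx i finPi by simp
    moreover have "\<forall>m<n. m \<noteq> i \<longrightarrow> inj_on c (P m)"
    proof (intro allI impI)
      fix m assume m: "m < n" "m \<noteq> i"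
      have "b \<notin> P m" using part_uniq[OF part m(1) i(1)] m i by blast
      then have "\<forall>x\<in>P m. c x = x" using part_sub[OF part m(1)] c_def by auto
      then show "inj_on c (P m)" unfolding inj_on_def by simp
    qed
    moreover have "\<forall>m<n. \<exists>m'<n. card (P m') = card (P m) \<and> c ` P m \<subseteq> P m'"
      using cPs by blast
    ultimately have "c \<in> C_i X P n l idx"
      unfolding C_i_def using cS idx i by (intro CollectI conjI) (auto intro!: exI[of _ i])
    then have cC: "c \<in> C_set X P n l r" unfolding C_set_def using idx by blast
    have "h = compose X h2 c"
    proof
      fix x show "h x = compose X h2 c x"
      proof (cases "x \<in> X")
        case True then show ?thesis unfolding compose_def c_def h2_def using ab by auto
      next
        case False then show ?thesis using less.prems(2) unfolding compose_def by auto
      qed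
    qed
    then show ?thesis using IH cC by (auto intro: gen_sg.intros)
  qed
qed

lemma block_pres_in:
  assumes "finite X" "is_sorted_partition X P n" "distinct_sizes P n l r"
    "h \<in> X \<rightarrow>\<^sub>E X" "\<forall>i<n. h ` P i \<subseteq> P i"
  shows "h \<in> gen_sg X (S_grp X P n \<union> B_set X P n l r \<union> C_set X P n l r)"
  using block_pres_gen[OF assms(1-3) refl assms(4,5)] gen_sg_mono1[of _ "S_grp X P n \<union> B_set X P n l r \<union> C_set X P n l r"]
  by blast

theorem lemma4p3:
  fixes X :: "'a set" and P :: "nat \<Rightarrow> 'a set" and n r :: nat
    and l :: "nat \<Rightarrow> nat" and f :: "'a \<Rightarrow> 'a"
  assumes "finite X" and "X \<noteq> {}"
    and "is_sorted_partition X P n"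
    and "distinct_sizes P n l r"
    and "f \<in> Sigma_sg X P n"
    and "\<exists>g. companion X P n (fbar P n f) g \<and>
               g \<in> gen_sg X (S_grp X P n \<union> B_set X P n l r)"
  shows "f \<in> gen_sg X (S_grp X P n \<union> B_set X P n l r \<union> C_set X P n l r)"
proof -
  let ?G = "S_grp X P n \<union> B_set X P n l r \<union> C_set X P n l r"
  note part = assms(3)
  define \<pi> where "\<pi> = fbar P n f"
  obtain g where comp: "companion X P n \<pi> g" and gG0: "g \<in> gen_sg X (S_grp X P n \<union> B_set X P n l r)"
    using assms(6) \<pi>_def by blast
  have gG: "g \<in> gen_sg X ?G" using gen_sg_mono1[OF _ gG0, of ?G] by blast
  have fT: "f \<in> T_sg X P n" using assms(5) unfolding Sigma_sg_def by blast
  have gS: "g \<in> Sigma_sg X P n" using comp unfolding companion_def by blast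
  have gT: "g \<in> T_sg X P n" using gS unfolding Sigma_sg_def by blast
  have fE: "f \<in> X \<rightarrow>\<^sub>E X" using fT unfolding T_sg_def by blast
  have gE: "g \<in> X \<rightarrow>\<^sub>E X" using gT unfolding T_sg_def by blast
  have fP: "\<And>i. i < n \<Longrightarrow> \<pi> i < n \<and> f ` P i \<subseteq> P (\<pi> i)"
    using fbar_spec[OF part fT] \<pi>_def by simp
  have gP: "\<And>i. i < n \<Longrightarrow> g ` P i \<subseteq> P (\<pi> i)"
    using fbar_spec[OF part gT] comp unfolding companion_def by metis
  have ginj: "\<And>i. i < n \<Longrightarrow> card (P i) \<le> card (P (\<pi> i)) \<Longrightarrow> inj_on g (P i)"
    using comp unfolding companion_def by blast
  have gsurj: "\<And>i. i < n \<Longrightarrow> card (P i) \<ge> card (P (\<pi> i)) \<Longrightarrow> g ` P i = P (\<pi> i)"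
    using comp unfolding companion_def by blast
  have "{..<n} \<subseteq> \<pi> ` {..<n}"
  proof
    fix j assume j: "j \<in> {..<n}"
    then have "f ` X \<inter> P j \<noteq> {}" using assms(5) unfolding Sigma_sg_def by blast
    then obtain x where x: "x \<in> X" "f x \<in> P j" by blast
    obtain i where i: "i < n" "x \<in> P i" using part_cover[OF part x(1)] by blast
    have "f x \<in> P (\<pi> i)" "\<pi> i < n" using fP[OF i(1)] i by blast+
    then have "\<pi> i = j" using part_uniq[OF part] x j by blast
    then show "j \<in> \<pi> ` {..<n}" using i by blast
  qed
  moreover have "\<pi> ` {..<n} \<subseteq> {..<n}" using fP by blast
  ultimately have "\<pi> ` {..<n} = {..<n}" by blast
  then have pinj: "inj_on \<pi> {..<n}" by (simp add: eq_card_imp_inj_on)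
  have pieq: "\<And>i j. i < n \<Longrightarrow> j < n \<Longrightarrow> \<pi> i = \<pi> j \<Longrightarrow> i = j"
    using pinj unfolding inj_on_def by blast
  define blk where "blk x = (THE i. i < n \<and> x \<in> P i)" for x
  have blk: "\<And>x i. i < n \<Longrightarrow> x \<in> P i \<Longrightarrow> blk x = i"
    unfolding blk_def using part_uniq[OF part] by blast
  have blkX: "\<And>x. x \<in> X \<Longrightarrow> blk x < n \<and> x \<in> P (blk x)"
    using part_cover[OF part] blk by metis
  define Inj where "Inj i \<longleftrightarrow> card (P i) \<le> card (P (\<pi> i))" for i
  define h1 where "h1 x = (if x \<in> X then (if Inj (blk x) then x else
      (SOME z. z \<in> P (blk x) \<and> g z = f x)) else undefined)" for x
  define h2 where "h2 y = (if y \<in> X then (if \<exists>x\<in>X. Inj (blk x) \<and> g x = y then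
      f (SOME x. x \<in> X \<and> Inj (blk x) \<and> g x = y) else y) else undefined)" for y
  have ex1: "\<And>x. x \<in> X \<Longrightarrow> \<not> Inj (blk x) \<Longrightarrow> \<exists>z. z \<in> P (blk x) \<and> g z = f x"
  proof -
    fix x assume x: "x \<in> X" "\<not> Inj (blk x)"
    have b: "blk x < n" "x \<in> P (blk x)" using blkX[OF x(1)] by auto
    have "g ` P (blk x) = P (\<pi> (blk x))" using gsurj[OF b(1)] x(2) Inj_def by simp
    moreover have "f x \<in> P (\<pi> (blk x))" using fP[OF b(1)] b by blast
    ultimately show "\<exists>z. z \<in> P (blk x) \<and> g z = f x" by (metis imageE)
  qed
  have h1P: "\<forall>i<n. h1 ` P i \<subseteq> P i"
  proof (intro allI impI subsetI)
    fix i y assume i: "i < n" and "y \<in> h1 ` P i"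
    then obtain x where x: "x \<in> P i" "y = h1 x" by blast
    have xX: "x \<in> X" using x part_sub[OF part i] by blast
    have bx: "blk x = i" using blk[OF i x(1)] .
    show "y \<in> P i"
    proof (cases "Inj i")
      case True then show ?thesis using x xX bx h1_def by simp
    next
      case False
      then have "(SOME z. z \<in> P (blk x) \<and> g z = f x) \<in> P (blk x)"
        using ex1[OF xX] bx by (metis (mono_tags, lifting) someI_ex)
      then show ?thesis using x xX bx False h1_def by simp
    qed
  qed
  have h2P: "\<forall>i<n. h2 ` P i \<subseteq> P i"
  proof (intro allI impI subsetI)
    fix i z assume i: "i < n" and "z \<in> h2 ` P i"
    then obtain y where y: "y \<in> P i" "z = h2 y" by blast
    have yX: "y \<in> X" using y part_sub[OF part i] by blast
    show "z \<in> P i"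
    proof (cases "\<exists>x\<in>X. Inj (blk x) \<and> g x = y")
      case True
      define x' where "x' = (SOME x. x \<in> X \<and> Inj (blk x) \<and> g x = y)"
      have x': "x' \<in> X" "Inj (blk x')" "g x' = y" using True someI_ex[of "\<lambda>x. x \<in> X \<and> Inj (blk x) \<and> g x = y"]
        unfolding x'_def by blast+
      have b: "blk x' < n" "x' \<in> P (blk x')" using blkX[OF x'(1)] by auto
      have "g x' \<in> P (\<pi> (blk x'))" "f x' \<in> P (\<pi> (blk x'))" "\<pi> (blk x') < n"
        using gP[OF b(1)] fP[OF b(1)] b by blast+
      then have "\<pi> (blk x') = i" using part_uniq[OF part] i y x' by metis
      then have "f x' \<in> P i" using \<open>f x' \<in> P (\<pi> (blk x'))\<close> by simp
      then show ?thesis using y yX True h2_def x'_def by simp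
    next
      case False
      have "h2 y = y" unfolding h2_def using yX False by (simp only: if_True if_False)
      then show ?thesis using y by simp
    qed
  qed
  have covX: "\<And>h. \<forall>i<n. h ` P i \<subseteq> P i \<Longrightarrow> (\<And>x. x \<notin> X \<Longrightarrow> h x = undefined) \<Longrightarrow> h \<in> X \<rightarrow>\<^sub>E X"
  proof -
    fix h assume a: "\<forall>i<n. h ` P i \<subseteq> P i" "\<And>x. x \<notin> X \<Longrightarrow> h x = undefined"
    have "\<And>x. x \<in> X \<Longrightarrow> h x \<in> X"
    proof -
      fix x assume x: "x \<in> X"
      obtain i where i: "i < n" "x \<in> P i" using part_cover[OF part x] by blast
      then show "h x \<in> X" using a(1) part_sub[OF part i(1)] by blast
    qed
    then show "h \<in> X \<rightarrow>\<^sub>E X" using a(2) by auto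
  qed
  have h1E: "h1 \<in> X \<rightarrow>\<^sub>E X" using covX[OF h1P] h1_def by simp
  have h2E: "h2 \<in> X \<rightarrow>\<^sub>E X" using covX[OF h2P] h2_def by simp
  have h1G: "h1 \<in> gen_sg X ?G" using block_pres_in[OF assms(1) part assms(4) h1E h1P] .
  have h2G: "h2 \<in> gen_sg X ?G" using block_pres_in[OF assms(1) part assms(4) h2E h2P] .
  have key: "\<And>x. x \<in> X \<Longrightarrow> h2 (g (h1 x)) = f x"
  proof -
    fix x assume xX: "x \<in> X"
    have b: "blk x < n" "x \<in> P (blk x)" using blkX[OF xX] by auto
    define i where "i = blk x"
    show "h2 (g (h1 x)) = f x"
    proof (cases "Inj i")
      case True
      have h1x: "h1 x = x" using True xX h1_def i_def by simp
      have gxX: "g x \<in> X" using gE xX by auto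
      have ex: "\<exists>x'\<in>X. Inj (blk x') \<and> g x' = g x" using xX True i_def by blast
      define x' where "x' = (SOME x'. x' \<in> X \<and> Inj (blk x') \<and> g x' = g x)"
      have x': "x' \<in> X" "Inj (blk x')" "g x' = g x" using ex someI_ex[of "\<lambda>x'. x' \<in> X \<and> Inj (blk x') \<and> g x' = g x"]
        unfolding x'_def by blast+
      have b': "blk x' < n" "x' \<in> P (blk x')" using blkX[OF x'(1)] by auto
      have "g x' \<in> P (\<pi> (blk x'))" "g x \<in> P (\<pi> i)" "\<pi> (blk x') < n" "\<pi> i < n"
        using gP[OF b'(1)] gP[OF b(1)] fP[OF b'(1)] fP[OF b(1)] b b' i_def by blast+
      then have "\<pi> (blk x') = \<pi> i" using part_uniq[OF part] x'(3) by metis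
      then have "blk x' = i" using pieq b'(1) b(1) i_def by blast
      then have "x' = x" using ginj[OF b(1)] True Inj_def x'(3) b b' i_def unfolding inj_on_def by metis
      then show ?thesis using h1x gxX ex h2_def x'_def by simp
    next
      case False
      define z where "z = (SOME z. z \<in> P (blk x) \<and> g z = f x)"
      have z: "z \<in> P i" "g z = f x" using ex1[OF xX] False i_def someI_ex[of "\<lambda>z. z \<in> P (blk x) \<and> g z = f x"]
        unfolding z_def by blast+
      have h1x: "h1 x = z" using False xX h1_def i_def z_def by simp
      have fxX: "f x \<in> X" using fE xX by auto
      have fxP: "f x \<in> P (\<pi> i)" "\<pi> i < n" using fP[OF b(1)] b i_def by blast+
      have nex: "\<not> (\<exists>x'\<in>X. Inj (blk x') \<and> g x' = f x)"
      proof
        assume "\<exists>x'\<in>X. Inj (blk x') \<and> g x' = f x"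
        then obtain x' where x': "x' \<in> X" "Inj (blk x')" "g x' = f x" by blast
        have b': "blk x' < n" "x' \<in> P (blk x')" using blkX[OF x'(1)] by auto
        have "g x' \<in> P (\<pi> (blk x'))" "\<pi> (blk x') < n" using gP[OF b'(1)] fP[OF b'(1)] b' by blast+
        then have "\<pi> (blk x') = \<pi> i" using part_uniq[OF part] x'(3) fxP by metis
        then have "blk x' = i" using pieq b'(1) b(1) i_def by blast
        then show False using x'(2) False by simp
      qed
      have "h2 (f x) = f x" unfolding h2_def using fxX nex by (simp only: if_True if_False)
      then show ?thesis using h1x z by simp
    qed
  qed
  have "f = compose X h2 (compose X g h1)"
  proof
    fix x show "f x = compose X h2 (compose X g h1) x"
    proof (cases "x \<in> X")
      case True
      have "h1 x \<in> X" using h1E True by auto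
      then show ?thesis using True key unfolding compose_def by simp
    next
      case False then show ?thesis using fE unfolding compose_def by auto
    qed
  qed
  then show ?thesis using h1G h2G gG by (metis gen_sg.comp)
qed

end
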